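(* Let $\alpha$ be fixed and let $p_1,p_2,\ldots$ be i.i.d. with distribution function $P$ on $[0,1]$ of the form in the context. For each $m$ let $\hat\pi_\alpha=\hat\pi_{\alpha,m}=h_{\alpha}/m$ be computed from $p_1,\ldots,p_m$. Then as $m\to\infty$, $\hat\pi_{\alpha,m}\to\bar\pi_\alpha$ in probability, where \[ \bar\pi_\alpha=\inf_{0\le x<1}\frac{1-P(x\alpha)}{1-x}>0 \] if $P(\alpha)<1$, and $\bar\pi_\alpha=0$ otherwise.
   Context: Efron mixture model: $P(x)=\gamma x+(1-\gamma)P_1(x)$ for $0\le x\le 1$, with $\gamma\in[0,1]$ and $P_1$ a distribution function on $[0,1]$ satisfying $P_1(x)\ge x$. Given $p_1,\ldots,p_m$: let $r_1,\ldots,r_m$ be a permutation with $p_{r_1}\le\cdots\le p_{r_m}$ and $K_i=\{r_{m-i+1},\ldots,r_m\}$. For $I\subseteq\{1,\ldots,m\}$, $p_{(i:I)}$ is the $i$-th smallest of $\{p_j:j\in I\}$; the Simes test rejects $I$ ($I\in\mathcal{U}_\alpha$) iff some $1\le i\le|I|$ has $|I|p_{(i:I)}\le i\alpha$. $h_\alpha=\max\{0\le i\le m: K_i\notin\mathcal{U}_\alpha\}$. *)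

theory Defs
  imports "HOL-Probability.Probability"
begin

definition distr_fun_01 :: "(real \<Rightarrow> real) \<Rightarrow> bool" where
  "distr_fun_01 F \<longleftrightarrow> mono F \<and> (\<forall>x. continuous (at_right x) F)
     \<and> (\<forall>x<0. F x = 0) \<and> (\<forall>x\<ge>1. F x = 1)"

definition efron_model :: "(real \<Rightarrow> real) \<Rightarrow> real \<Rightarrow> (real \<Rightarrow> real) \<Rightarrow> bool" where
  "efron_model P \<gamma> P1 \<longleftrightarrow> \<gamma> \<in> {0..1} \<and> distr_fun_01 P1 \<and> (\<forall>x\<in>{0..1}. P1 x \<ge> x)
     \<and> (\<forall>x\<in>{0..1}. P x = \<gamma> * x + (1 - \<gamma>) * P1 x)"

definition ord_stat :: "(nat \<Rightarrow> real) \<Rightarrow> nat set \<Rightarrow> nat \<Rightarrow> real" where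
  "ord_stat p I i = sort (map p (sorted_list_of_set I)) ! (i - 1)"

definition simes_rejects :: "real \<Rightarrow> (nat \<Rightarrow> real) \<Rightarrow> nat set \<Rightarrow> bool" where
  "simes_rejects \<alpha> p I \<longleftrightarrow> (\<exists>i\<in>{1..card I}. real (card I) * ord_stat p I i \<le> real i * \<alpha>)"

text \<open>r_1,...,r_m: indices 1..m sorted by increasing p-value; K_i = {r_(m-i+1),...,r_m}.\<close>
definition K_set :: "nat \<Rightarrow> (nat \<Rightarrow> real) \<Rightarrow> nat \<Rightarrow> nat set" where
  "K_set m p i = set (drop (m - i) (sort_key p [1..<m+1]))"

definition h_alpha :: "real \<Rightarrow> nat \<Rightarrow> (nat \<Rightarrow> real) \<Rightarrow> nat" where
  "h_alpha \<alpha> m p = Max {i \<in> {0..m}. \<not> simes_rejects \<alpha> p (K_set m p i)}"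

definition pi_bar :: "(real \<Rightarrow> real) \<Rightarrow> real \<Rightarrow> real" where
  "pi_bar P \<alpha> = (if P \<alpha> < 1 then (INF x\<in>{0..<1}. (1 - P (x * \<alpha>)) / (1 - x)) else 0)"

definition conv_in_prob :: "'a measure \<Rightarrow> (nat \<Rightarrow> 'a \<Rightarrow> real) \<Rightarrow> real \<Rightarrow> bool" where
  "conv_in_prob M X c \<longleftrightarrow>
     (\<forall>\<epsilon>>0. (\<lambda>m. measure M {\<omega> \<in> space M. \<bar>X m \<omega> - c\<bar> > \<epsilon>}) \<longlonglongrightarrow> 0)"

end

theory Submission
  imports Defs
begin


lemma real_card_filter:
  assumes "finite A"
  shows "real (card {k\<in>A. Q k}) = (\<Sum>k\<in>A. if Q k then 1 else 0)"
proof -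
  have "real (card {k\<in>A. Q k}) = (\<Sum>k\<in>{k\<in>A. Q k}. 1)" by simp
  also have "\<dots> = (\<Sum>k\<in>A. if Q k then 1 else 0)" using assms by (rule sum.inter_filter)
  finally show ?thesis .
qed

lemma wlln:
  fixes M :: "'a measure" and p :: "nat \<Rightarrow> 'a \<Rightarrow> real" and P :: "real \<Rightarrow> real"
  assumes "prob_space M" and pm: "\<And>i. p i \<in> borel_measurable M"
    and ind: "prob_space.indep_vars M (\<lambda>_. borel) p UNIV"
    and PP: "\<And>i x. measure M {\<omega> \<in> space M. p i \<omega> \<le> x} = P x"
    and "\<delta> > 0"
  shows "(\<lambda>m. measure M {\<omega> \<in> space M. \<delta> \<le> \<bar>real (card {k\<in>{1..m}. p k \<omega> \<le> s}) / real m - P s\<bar>}) \<longlonglongrightarrow> 0"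
proof -
  interpret prob_space M by fact
  note pm[measurable]
  define Z where "Z k \<omega> = (if p k \<omega> \<le> s then 1 else 0) - P s" for k \<omega>
  have Zm[measurable]: "Z k \<in> borel_measurable M" for k unfolding Z_def by measurable
  have P01': "0 \<le> P s \<and> P s \<le> 1" unfolding PP[of 0 s, symmetric] by simp
  have P01: "0 \<le> P s" "P s \<le> 1" using P01' by auto
  have Zb: "\<bar>Z k \<omega>\<bar> \<le> 1" for k \<omega> using P01 unfolding Z_def by auto
  have ZZb: "\<bar>Z k \<omega> * Z l \<omega>\<bar> \<le> 1" for k l \<omega>
    unfolding abs_mult by (rule mult_le_one) (use Zb in auto)
  have Zi: "integrable M (Z k)" for k
    by (rule integrable_const_bound[where B=1]) (use Zb in auto)
  have Z2i: "integrable M (\<lambda>\<omega>. Z k \<omega> * Z l \<omega>)" for k l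
    by (rule integrable_const_bound[where B=1]) (use ZZb in auto)
  have EZ: "(\<integral>\<omega>. Z k \<omega> \<partial>M) = 0" for k
  proof -
    have "(\<integral>\<omega>. Z k \<omega> \<partial>M) = (\<integral>\<omega>. indicator {\<omega> \<in> space M. p k \<omega> \<le> s} \<omega> - P s \<partial>M)"
      unfolding Z_def by (intro Bochner_Integration.integral_cong) (auto simp: indicator_def)
    also have "\<dots> = measure M {\<omega> \<in> space M. p k \<omega> \<le> s} - P s"
      by (subst Bochner_Integration.integral_diff) (auto simp: prob_space integrable_indicator_iff less_top[symmetric])
    finally show ?thesis using PP by simp
  qed
  have indZ: "indep_vars (\<lambda>_. borel) Z UNIV"
    unfolding Z_def
    by (rule indep_vars_compose2[where Y="\<lambda>k x. (if x \<le> s then 1 else 0) - P s", OF ind]) measurable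
  have EZZ: "(\<integral>\<omega>. Z k \<omega> * Z l \<omega> \<partial>M) = 0" if "k \<noteq> l" for k l
  proof -
    have "(\<integral>\<omega>. (\<Prod>i\<in>{k,l}. Z i \<omega>) \<partial>M) = (\<Prod>i\<in>{k,l}. \<integral>\<omega>. Z i \<omega> \<partial>M)"
      by (rule indep_vars_lebesgue_integral) (auto intro: indep_vars_subset[OF indZ] Zi)
    then show ?thesis using that EZ by simp
  qed
  define S where "S m \<omega> = (\<Sum>k\<in>{1..m}. Z k \<omega>)" for m \<omega>
  have Sm[measurable]: "S m \<in> borel_measurable M" for m unfolding S_def by measurable
  have ES2: "(\<integral>\<omega>. (S m \<omega>)^2 \<partial>M) \<le> real m" for m
  proof -
    have "(\<integral>\<omega>. (S m \<omega>)^2 \<partial>M) = (\<integral>\<omega>. (\<Sum>k\<in>{1..m}. \<Sum>l\<in>{1..m}. Z k \<omega> * Z l \<omega>) \<partial>M)"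
      unfolding S_def power2_eq_square sum_product by simp
    also have "\<dots> = (\<Sum>k\<in>{1..m}. \<Sum>l\<in>{1..m}. (\<integral>\<omega>. Z k \<omega> * Z l \<omega> \<partial>M))"
      by (simp add: integral_sum Z2i integrable_sum)
    also have "\<dots> = (\<Sum>k\<in>{1..m}. \<Sum>l\<in>{1..m}. (if k = l then (\<integral>\<omega>. Z k \<omega> * Z k \<omega> \<partial>M) else 0))"
      by (intro sum.cong refl) (auto simp: EZZ)
    also have "\<dots> = (\<Sum>k\<in>{1..m}. (\<integral>\<omega>. Z k \<omega> * Z k \<omega> \<partial>M))"
      by (simp add: sum.delta)
    also have "\<dots> \<le> (\<Sum>k\<in>{1..m}. 1)"
    proof (rule sum_mono)
      fix k
      have "(\<integral>\<omega>. Z k \<omega> * Z k \<omega> \<partial>M) \<le> (\<integral>\<omega>. 1 \<partial>M)"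
        by (rule integral_mono) (use ZZb Z2i in \<open>auto simp: abs_le_iff\<close>)
      then show "(\<integral>\<omega>. Z k \<omega> * Z k \<omega> \<partial>M) \<le> 1" by (simp add: prob_space)
    qed
    finally show ?thesis by simp
  qed
  have bound: "measure M {\<omega> \<in> space M. \<delta> \<le> \<bar>real (card {k\<in>{1..m}. p k \<omega> \<le> s}) / real m - P s\<bar>}
      \<le> 1 / (\<delta>^2 * real m)" if "m > 0" for m
  proof -
    have eq: "{\<omega> \<in> space M. \<delta> \<le> \<bar>real (card {k\<in>{1..m}. p k \<omega> \<le> s}) / real m - P s\<bar>}
       = {\<omega> \<in> space M. \<delta> * real m \<le> \<bar>S m \<omega>\<bar>}"
    proof -
      have "\<bar>real (card {k\<in>{1..m}. p k \<omega> \<le> s}) / real m - P s\<bar> = \<bar>S m \<omega>\<bar> / real m" for \<omega>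
      proof -
        have "S m \<omega> = real (card {k\<in>{1..m}. p k \<omega> \<le> s}) - real m * P s"
        proof -
          have c: "real (card {k\<in>{1..m}. p k \<omega> \<le> s}) = (\<Sum>k\<in>{1..m}. if p k \<omega> \<le> s then 1 else 0)"
            by (rule real_card_filter) simp
          show ?thesis unfolding S_def Z_def sum_subtractf c by simp
        qed
        moreover have "real (card {k\<in>{1..m}. p k \<omega> \<le> s}) / real m - P s = (real (card {k\<in>{1..m}. p k \<omega> \<le> s}) - real m * P s) / real m"
          using that by (simp add: field_simps)
        ultimately show ?thesis by (simp add: abs_divide)
      qed
      moreover have "\<delta> \<le> \<bar>S m \<omega>\<bar> / real m \<longleftrightarrow> \<delta> * real m \<le> \<bar>S m \<omega>\<bar>" for \<omega>
        using that by (simp add: pos_le_divide_eq)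
      ultimately show ?thesis by simp
    qed
    have "measure M {\<omega> \<in> space M. \<delta> * real m \<le> \<bar>S m \<omega>\<bar>} \<le> (\<integral>\<omega>. (S m \<omega>)^2 \<partial>M) / (\<delta> * real m)^2"
      by (rule second_moment_method) (use that \<open>\<delta> > 0\<close> in \<open>auto simp: S_def power2_eq_square sum_product intro!: integrable_sum Z2i\<close>)
    also have "\<dots> \<le> real m / (\<delta> * real m)^2"
      by (rule divide_right_mono) (auto simp: ES2)
    also have "\<dots> = 1 / (\<delta>^2 * real m)" using that by (simp add: power2_eq_square field_simps)
    finally show ?thesis using eq by simp
  qed
  have lim: "(\<lambda>m. 1 / (\<delta>^2 * real m)) \<longlonglongrightarrow> 0"
    using tendsto_mult_right_zero[OF lim_inverse_n', of "1/\<delta>^2"] by (simp add: field_simps)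
  show ?thesis
    by (rule tendsto_sandwich[OF _ _ tendsto_const lim])
       (use bound in \<open>auto simp: eventually_sequentially intro!: exI[of _ 1]\<close>)
qed



lemma sorted_nth_le_iff:
  fixes ys :: "real list"
  assumes "sorted ys" "idx < length ys"
  shows "ys ! idx \<le> x \<longleftrightarrow> idx < length (filter (\<lambda>v. v \<le> x) ys)"
  using assms
proof (induction ys arbitrary: idx)
  case Nil then show ?case by simp
next
  case (Cons a zs)
  show ?case
  proof (cases "a \<le> x")
    case True
    then show ?thesis using Cons by (cases idx) auto
  next
    case False
    then have "filter (\<lambda>v. v \<le> x) zs = []" using Cons.prems(1) by (auto simp: filter_empty_conv)
    moreover have "(a # zs) ! idx \<ge> a" using Cons.prems by (cases idx) auto
    ultimately show ?thesis using False by auto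
  qed
qed

lemma length_filter_mset_eq:
  "mset xs = mset ys \<Longrightarrow> length (filter P xs) = length (filter P ys)"
  by (metis mset_filter size_mset)

lemma ord_stat_le_iff:
  assumes "finite I" "1 \<le> j" "j \<le> card I"
  shows "ord_stat q I j \<le> x \<longleftrightarrow> j \<le> card {k\<in>I. q k \<le> x}"
proof -
  define xs where "xs = map q (sorted_list_of_set I)"
  have len: "length (sort xs) = card I" unfolding xs_def using assms by simp
  have "length (filter (\<lambda>v. v \<le> x) (sort xs)) = length (filter (\<lambda>v. v \<le> x) xs)"
    by (rule length_filter_mset_eq) simp
  also have "\<dots> = length (filter (\<lambda>k. q k \<le> x) (sorted_list_of_set I))"
    unfolding xs_def by (simp add: filter_map comp_def)
  also have "\<dots> = card (set (filter (\<lambda>k. q k \<le> x) (sorted_list_of_set I)))"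
    by (rule distinct_card[symmetric]) simp
  also have "\<dots> = card {k\<in>I. q k \<le> x}" using assms by simp
  finally have c: "length (filter (\<lambda>v. v \<le> x) (sort xs)) = card {k\<in>I. q k \<le> x}" .
  have "ord_stat q I j = sort xs ! (j - 1)" unfolding ord_stat_def xs_def by simp
  then show ?thesis
    using sorted_nth_le_iff[of "sort xs" "j - 1" x] len c assms by auto
qed

lemma K_props:
  assumes "i \<le> m"
  shows "K_set m q i \<subseteq> {1..m}" "card (K_set m q i) = i"
    "\<And>a b. a \<in> K_set m q i \<Longrightarrow> b \<in> {1..m} - K_set m q i \<Longrightarrow> q b \<le> q a"
proof -
  define L where "L = sort_key q [1..<m+1]"
  have mL: "mset L = mset [1..<m+1]" unfolding L_def by simp
  have sL: "set L = {1..m}" using mset_eq_setD[OF mL] by auto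
  have dL: "distinct L" unfolding L_def by simp
  have lL: "length L = m" unfolding L_def by simp
  have soL: "sorted (map q L)" unfolding L_def by simp
  have K: "K_set m q i = set (drop (m - i) L)" unfolding K_set_def L_def by simp
  show "K_set m q i \<subseteq> {1..m}" unfolding K using sL by (metis set_drop_subset)
  show "card (K_set m q i) = i" unfolding K using dL lL assms
    by (simp add: distinct_card)
  fix a b assume a: "a \<in> K_set m q i" and b: "b \<in> {1..m} - K_set m q i"
  have "set L = set (take (m - i) L) \<union> set (drop (m - i) L)"
    by (metis append_take_drop_id set_append)
  then have bt: "b \<in> set (take (m - i) L)" using a b sL K by auto
  have "sorted (map q (take (m - i) L) @ map q (drop (m - i) L))"
    using soL by (metis append_take_drop_id map_append)
  then show "q b \<le> q a" using bt a K by (auto simp: sorted_append)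
qed

lemma K_count:
  assumes "i \<le> m"
  shows "card {k\<in>K_set m q i. q k \<le> x} = card {k\<in>{1..m}. q k \<le> x} - (m - i)"
proof -
  define K where "K = K_set m q i"
  define A where "A = {k\<in>{1..m}. q k \<le> x}"
  define Ot where "Ot = {1..m} - K"
  have KS: "K \<subseteq> {1..m}" and cK: "card K = i" and dom: "\<And>a b. a \<in> K \<Longrightarrow> b \<in> Ot \<Longrightarrow> q b \<le> q a"
    using K_props[OF assms] unfolding K_def Ot_def by auto
  have cO: "card Ot = m - i" unfolding Ot_def using KS cK by (simp add: card_Diff_subset finite_subset)
  show ?thesis
  proof (cases "\<exists>a\<in>K. q a \<le> x")
    case True
    then obtain a where "a \<in> K" "q a \<le> x" by auto
    then have OA: "Ot \<subseteq> A" using dom unfolding A_def Ot_def by force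
    have "A = {k\<in>K. q k \<le> x} \<union> Ot" using OA KS unfolding A_def Ot_def by auto
    moreover have "{k\<in>K. q k \<le> x} \<inter> Ot = {}" unfolding Ot_def by auto
    ultimately have "card A = card {k\<in>K. q k \<le> x} + card Ot"
      by (simp add: card_Un_disjoint Ot_def finite_subset[OF KS])
    then show ?thesis using cO unfolding A_def K_def by simp
  next
    case False
    then have "A \<subseteq> Ot" unfolding A_def Ot_def by auto
    then have "card A \<le> m - i" using cO by (metis Ot_def card_mono finite_Diff finite_atLeastAtMost)
    moreover have "{k\<in>K. q k \<le> x} = {}" using False by auto
    ultimately show ?thesis unfolding K_def[symmetric] A_def[symmetric] by (metis card.empty diff_is_0_eq)
  qed
qed

lemma rej_iff:
  assumes "i \<le> m" "0 < i"
  shows "simes_rejects \<alpha> q (K_set m q i) \<longleftrightarrow>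
    (\<exists>j\<in>{1..i}. m - i + j \<le> card {k\<in>{1..m}. q k \<le> real j * \<alpha> / real i})"
proof -
  have cK: "card (K_set m q i) = i" and fK: "finite (K_set m q i)"
    using K_props[OF assms(1)] by (auto intro: finite_subset)
  have "real i * ord_stat q (K_set m q i) j \<le> real j * \<alpha> \<longleftrightarrow>
        m - i + j \<le> card {k\<in>{1..m}. q k \<le> real j * \<alpha> / real i}" if "j \<in> {1..i}" for j
  proof -
    have "real i * ord_stat q (K_set m q i) j \<le> real j * \<alpha> \<longleftrightarrow> ord_stat q (K_set m q i) j \<le> real j * \<alpha> / real i"
      using assms by (simp add: pos_le_divide_eq mult.commute)
    also have "\<dots> \<longleftrightarrow> j \<le> card {k\<in>K_set m q i. q k \<le> real j * \<alpha> / real i}"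
      by (rule ord_stat_le_iff) (use fK cK that in auto)
    also have "\<dots> \<longleftrightarrow> m - i + j \<le> card {k\<in>{1..m}. q k \<le> real j * \<alpha> / real i}"
      unfolding K_count[OF assms(1)] using that by auto
    finally show ?thesis .
  qed
  then show ?thesis unfolding simes_rejects_def cK by auto
qed

lemma h_props:
  shows "h_alpha \<alpha> m q \<le> m" "\<not> simes_rejects \<alpha> q (K_set m q (h_alpha \<alpha> m q))"
    "\<And>i. i \<le> m \<Longrightarrow> \<not> simes_rejects \<alpha> q (K_set m q i) \<Longrightarrow> i \<le> h_alpha \<alpha> m q"
proof -
  define H where "H = {i \<in> {0..m}. \<not> simes_rejects \<alpha> q (K_set m q i)}"
  have fH: "finite H" unfolding H_def by simp
  have "card (K_set m q 0) = 0" using K_props(2)[where i=0 and m=m and q=q] by simp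
  then have "0 \<in> H" unfolding H_def simes_rejects_def by simp
  then have "h_alpha \<alpha> m q \<in> H" unfolding h_alpha_def H_def[symmetric] using fH Max_in by blast
  then show "h_alpha \<alpha> m q \<le> m" "\<not> simes_rejects \<alpha> q (K_set m q (h_alpha \<alpha> m q))"
    unfolding H_def by auto
  fix i assume "i \<le> m" "\<not> simes_rejects \<alpha> q (K_set m q i)"
  then have "i \<in> H" unfolding H_def by auto
  then show "i \<le> h_alpha \<alpha> m q" unfolding h_alpha_def H_def[symmetric] using fH by simp
qed



lemma lower_arith:
  fixes Pb c \<pi> \<epsilon> r t b L :: real
  assumes "Pb \<le> 1 - c" "Pb \<le> 1 - \<pi> * (1 - b)"
    "0 \<le> r" "r \<le> 1" "r \<le> \<pi> - \<epsilon>/2" "0 < t" "t \<le> b" "b \<le> t + 1/L" "b \<le> 1"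
    "\<pi> \<le> 1" "0 \<le> \<pi>" "1/L < \<epsilon>*c/8" "c > 0" "\<epsilon> > 0" "\<epsilon> \<le> 1"
  shows "Pb + \<epsilon>*c/8 \<le> 1 - r * (1 - t)"
proof (cases "1 - t < c/2")
  case True
  have "r * (1 - t) \<le> 1 - t" using assms by (intro mult_left_le_one_le) auto
  moreover have "\<epsilon>*c/8 \<le> c/8" using assms by auto
  ultimately show ?thesis using assms True by linarith
next
  case False
  have "\<pi> * (b - t) \<le> 1 * (b - t)" using assms by (intro mult_right_mono) auto
  then have a: "\<pi> * (1 - b) \<ge> \<pi> * (1 - t) - 1/L" using assms by (simp add: algebra_simps)
  have "(\<epsilon>/2) * (c/2) \<le> (\<pi> - r) * (1 - t)" using assms False
    by (intro mult_mono) auto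
  then have "r * (1 - t) \<le> \<pi> * (1 - t) - \<epsilon>*c/4" by (simp add: algebra_simps)
  then show ?thesis using a assms by linarith
qed



theorem lemma6:
  fixes M :: "'a measure" and p :: "nat \<Rightarrow> 'a \<Rightarrow> real"
    and P P1 :: "real \<Rightarrow> real" and \<gamma> \<alpha> :: real
  assumes "prob_space M"
    and "0 < \<alpha>" and "\<alpha> < 1"
    and "efron_model P \<gamma> P1"
    and "\<And>i. p i \<in> borel_measurable M"
    and "prob_space.indep_vars M (\<lambda>_. borel) p UNIV"
    and "\<And>i \<omega>. \<omega> \<in> space M \<Longrightarrow> p i \<omega> \<in> {0..1}"
    and "\<And>i x. measure M {\<omega> \<in> space M. p i \<omega> \<le> x} = P x"
  shows "conv_in_prob M (\<lambda>m \<omega>. real (h_alpha \<alpha> m (\<lambda>i. p i \<omega>)) / real m) (pi_bar P \<alpha>)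
    \<and> (P \<alpha> < 1 \<longrightarrow> pi_bar P \<alpha> > 0)"
proof -
  interpret prob_space M by fact
  note pm[measurable] = assms(5)
  have PP: "\<And>i x. measure M {\<omega> \<in> space M. p i \<omega> \<le> x} = P x" by (rule assms(8))
  have P01': "0 \<le> P x \<and> P x \<le> 1" for x unfolding PP[of 0 x, symmetric] by simp
  have P0: "0 \<le> P x" and P1: "P x \<le> 1" for x using P01' by auto
  have Pmono: "P x \<le> P y" if "x \<le> y" for x y
    unfolding PP[of 0 x, symmetric] PP[of 0 y, symmetric]
    by (rule finite_measure_mono) (use that in auto)
  have Nmono: "card {k\<in>{1..m}. p k \<omega> \<le> s} \<le> card {k\<in>{1..m}. p k \<omega> \<le> s'}" if "s \<le> s'" for m \<omega> s s'
    by (rule card_mono) (use that in auto)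
  have Nmeas[measurable]: "(\<lambda>\<omega>. real (card {k\<in>{1..m}. p k \<omega> \<le> s})) \<in> borel_measurable M" for m s
  proof -
    have "(\<lambda>\<omega>. real (card {k\<in>{1..m}. p k \<omega> \<le> s})) = (\<lambda>\<omega>. \<Sum>k\<in>{1..m}. if p k \<omega> \<le> s then 1 else 0)"
      by (rule ext, rule real_card_filter) simp
    also have "\<dots> \<in> borel_measurable M" by measurable
    finally show ?thesis .
  qed
  define g where "g x = (1 - P (x * \<alpha>)) / (1 - x)" for x
  have gnn: "0 \<le> g x" if "x \<in> {0..<1}" for x using that P1[of "x*\<alpha>"] unfolding g_def by auto
  have bdd: "bdd_below (g ` {0..<1})" using gnn by (auto intro!: bdd_belowI[where m=0])
  have pib: "pi_bar P \<alpha> = (INF x\<in>{0..<1}. g x)" if "P \<alpha> < 1"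
    using that unfolding pi_bar_def g_def by simp
  have piglb: "pi_bar P \<alpha> \<le> g x" if "P \<alpha> < 1" "x \<in> {0..<1}" for x
    unfolding pib[OF that(1)] by (rule cINF_lower[OF bdd that(2)])
  have pipos: "1 - P \<alpha> \<le> pi_bar P \<alpha>" if "P \<alpha> < 1"
    unfolding pib[OF that]
  proof (rule cINF_greatest)
    show "{0..<(1::real)} \<noteq> {}" by simp
    fix x :: real assume x: "x \<in> {0..<1}"
    have "P (x * \<alpha>) \<le> P \<alpha>" using x assms(2) by (intro Pmono) (auto intro: mult_left_le_one_le)
    then have "1 - P \<alpha> \<le> 1 - P (x * \<alpha>)" by simp
    also have "\<dots> \<le> (1 - P (x * \<alpha>)) / (1 - x)"
    proof -
      have "(1 - P (x*\<alpha>)) * (1 - x) \<le> (1 - P (x*\<alpha>)) * 1" using x P1[of "x*\<alpha>"]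
        by (intro mult_left_mono) auto
      then show ?thesis using x by (simp add: le_divide_eq)
    qed
    finally show "1 - P \<alpha> \<le> g x" unfolding g_def .
  qed
  have pile1: "pi_bar P \<alpha> \<le> 1" if "P \<alpha> < 1"
    using piglb[OF that, of 0] P0[of 0] unfolding g_def by simp
  show ?thesis
  proof
    show "P \<alpha> < 1 \<longrightarrow> pi_bar P \<alpha> > 0" using pipos by force
    show "conv_in_prob M (\<lambda>m \<omega>. real (h_alpha \<alpha> m (\<lambda>i. p i \<omega>)) / real m) (pi_bar P \<alpha>)"
      unfolding conv_in_prob_def
    proof (intro allI impI)
      fix \<epsilon> :: real assume \<epsilon>: "\<epsilon> > 0"
      define A where "A m = {\<omega> \<in> space M. \<bar>real (h_alpha \<alpha> m (\<lambda>i. p i \<omega>)) / real m - pi_bar P \<alpha>\<bar> > \<epsilon>}" for m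
      show "(\<lambda>m. measure M {\<omega> \<in> space M. \<bar>real (h_alpha \<alpha> m (\<lambda>i. p i \<omega>)) / real m - pi_bar P \<alpha>\<bar> > \<epsilon>}) \<longlonglongrightarrow> 0"
      proof (cases "P \<alpha> < 1")
        case False
        then have P\<alpha>: "P \<alpha> = 1" using P1[of \<alpha>] by simp
        have pi0: "pi_bar P \<alpha> = 0" using False unfolding pi_bar_def by simp
        have "measure M (A m) = 0" for m
        proof -
          define U where "U = (\<Union>k\<in>{1..m}. {\<omega>\<in>space M. \<alpha> < p k \<omega>})"
          have sub: "A m \<subseteq> U"
          proof
            fix \<omega> assume \<omega>: "\<omega> \<in> A m"
            define q where "q = (\<lambda>i. p i \<omega>)"
            define h where "h = h_alpha \<alpha> m q"
            have "h \<noteq> 0"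
            proof
              assume "h = 0"
              then show False using \<omega> \<epsilon> pi0 by (simp add: A_def h_def q_def)
            qed
            then have h0: "0 < h" by simp
            have hm: "h \<le> m" and nr: "\<not> simes_rejects \<alpha> q (K_set m q h)"
              using h_props unfolding h_def by auto
            have all: "\<forall>j\<in>{1..h}. \<not> (m - h + j \<le> card {k\<in>{1..m}. q k \<le> real j * \<alpha> / real h})"
              using nr rej_iff[OF hm h0, of \<alpha> q] by blast
            have "\<not> (m - h + h \<le> card {k\<in>{1..m}. q k \<le> real h * \<alpha> / real h})"
              using bspec[OF all, of h] h0 by simp
            moreover have "real h * \<alpha> / real h = \<alpha>" using h0 by simp
            ultimately have lt: "card {k\<in>{1..m}. q k \<le> \<alpha>} < m" using hm h0 by simp
            have "\<exists>k\<in>{1..m}. \<not> q k \<le> \<alpha>"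
            proof (rule ccontr)
              assume "\<not> ?thesis"
              then have "{k\<in>{1..m}. q k \<le> \<alpha>} = {1..m}" by auto
              then show False using lt by simp
            qed
            then show "\<omega> \<in> U" using \<omega> unfolding U_def q_def A_def by (auto simp: not_le)
          qed
          have "measure M U \<le> (\<Sum>k\<in>{1..m}. measure M {\<omega>\<in>space M. \<alpha> < p k \<omega>})"
            unfolding U_def by (rule finite_measure_subadditive_finite) auto
          also have "\<dots> = 0"
          proof (rule sum.neutral, rule ballI)
            fix k
            have "{\<omega>\<in>space M. \<alpha> < p k \<omega>} = space M - {\<omega>\<in>space M. p k \<omega> \<le> \<alpha>}" by auto
            then have "measure M {\<omega>\<in>space M. \<alpha> < p k \<omega>} = 1 - P \<alpha>"
              by (simp add: prob_compl PP)
            then show "measure M {\<omega>\<in>space M. \<alpha> < p k \<omega>} = 0" using P\<alpha> by simp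
          qed
          finally have "measure M U \<le> 0" .
          moreover have "measure M (A m) \<le> measure M U"
            by (rule finite_measure_mono[OF sub]) (auto simp: U_def)
          ultimately show ?thesis using measure_nonneg[of M "A m"] by linarith
        qed
        then show ?thesis by (simp add: A_def)
      next
        case True
        define \<pi> where "\<pi> = pi_bar P \<alpha>"
        define c where "c = 1 - P \<alpha>"
        have c0: "c > 0" using True unfolding c_def by simp
        have pic: "c \<le> \<pi>" using pipos[OF True] unfolding c_def \<pi>_def by simp
        have pi1: "\<pi> \<le> 1" using pile1[OF True] unfolding \<pi>_def by simp
        have "(INF x\<in>{0..<1}. g x) < \<pi> + \<epsilon>/3" using pib[OF True] \<epsilon> unfolding \<pi>_def by simp
        then obtain x0 where x0: "x0 \<in> {0..<1}" "g x0 < \<pi> + \<epsilon>/3"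
          using cINF_less_iff[OF _ bdd] by auto
        define \<delta>1 where "\<delta>1 = (1 - x0) * \<epsilon> / 3"
        have \<delta>1: "\<delta>1 > 0" using x0 \<epsilon> unfolding \<delta>1_def by simp
        define \<eta> where "\<eta> = \<epsilon> * c / 8"
        have \<eta>: "\<eta> > 0" using \<epsilon> c0 unfolding \<eta>_def by simp
        obtain L :: nat where L: "0 < L" "inverse (real L) < \<epsilon> * c / 8"
          using ex_inverse_of_nat_less[of "\<epsilon> * c / 8"] \<epsilon> c0 by auto
        have L': "1 / real L < \<epsilon> * c / 8" using L by (simp add: inverse_eq_divide)
        define E1 where "E1 m = {\<omega>\<in>space M. \<delta>1 \<le> \<bar>real (card {k\<in>{1..m}. p k \<omega> \<le> x0*\<alpha>}) / real m - P (x0*\<alpha>)\<bar>}" for m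
        define E2 where "E2 m kk = {\<omega>\<in>space M. \<eta> \<le> \<bar>real (card {k\<in>{1..m}. p k \<omega> \<le> real kk*\<alpha>/real L}) / real m - P (real kk*\<alpha>/real L)\<bar>}" for m kk
        have E1s: "E1 m \<in> sets M" for m unfolding E1_def by measurable
        have E2s: "E2 m kk \<in> sets M" for m kk unfolding E2_def by measurable
        define M0 :: nat where "M0 = nat \<lceil>2/\<epsilon>\<rceil> + 1"
        have incl: "A m \<subseteq> E1 m \<union> (\<Union>kk\<in>{1..L}. E2 m kk)" if mM0: "M0 \<le> m" for m
        proof
          fix \<omega> assume \<omega>A: "\<omega> \<in> A m"
          show "\<omega> \<in> E1 m \<union> (\<Union>kk\<in>{1..L}. E2 m kk)"
          proof (rule ccontr)
            assume nE: "\<not> ?thesis"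
            have \<omega>: "\<omega> \<in> space M" using \<omega>A unfolding A_def by simp
            have nE1: "\<omega> \<notin> E1 m" and nE2: "\<And>kk. kk\<in>{1..L} \<Longrightarrow> \<omega> \<notin> E2 m kk" using nE by auto
            define q where "q = (\<lambda>i. p i \<omega>)"
            define h where "h = h_alpha \<alpha> m q"
            have dev: "\<epsilon> < \<bar>real h / real m - \<pi>\<bar>" using \<omega>A unfolding A_def h_def q_def \<pi>_def by simp
            have "2/\<epsilon> \<le> real (nat \<lceil>2/\<epsilon>\<rceil>)" by linarith
            then have mbig: "2/\<epsilon> < real m" using mM0 unfolding M0_def by linarith
            have mpos: "0 < real m" using mbig \<epsilon> by (smt (verit) divide_pos_pos)
            have invm: "1 / real m < \<epsilon>/2" using mbig \<epsilon> mpos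
              by (simp add: divide_less_eq field_simps)
            have hm: "h \<le> m" and nr: "\<not> simes_rejects \<alpha> q (K_set m q h)"
              using h_props unfolding h_def by auto
            have hmax: "\<And>i. i \<le> m \<Longrightarrow> \<not> simes_rejects \<alpha> q (K_set m q i) \<Longrightarrow> i \<le> h"
              using h_props unfolding h_def by auto
            have "real h / real m > \<pi> + \<epsilon> \<or> real h / real m < \<pi> - \<epsilon>" using dev by linarith
            then show False
            proof
              assume up: "real h / real m > \<pi> + \<epsilon>"
              have hgt: "(\<pi> + \<epsilon>) * real m < real h" using up mpos by (simp add: pos_less_divide_eq)
              have "0 < (\<pi> + \<epsilon>) * real m" using pic c0 \<epsilon> mpos by simp
              then have h0: "0 < h" using hgt by simp
              define j where "j = max 1 (nat \<lceil>x0 * real h\<rceil>)"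
              have xh: "x0 * real h \<le> real h" using x0 by (intro mult_left_le_one_le) auto
              have j1: "1 \<le> j" unfolding j_def by simp
              have jh: "j \<le> h"
              proof -
                have "\<lceil>x0 * real h\<rceil> \<le> int h" using xh by (simp add: ceiling_le_iff)
                then show ?thesis unfolding j_def using h0 x0 by simp
              qed
              have xh0: "0 \<le> x0 * real h" using x0 by simp
              have jge: "x0 * real h \<le> real j"
              proof -
                have "x0 * real h \<le> real_of_int \<lceil>x0 * real h\<rceil>" by simp
                also have "\<dots> = real (nat \<lceil>x0 * real h\<rceil>)" using xh0 by simp
                also have "\<dots> \<le> real j" unfolding j_def by simp
                finally show ?thesis .
              qed
              have jle: "real j \<le> x0 * real h + 1"
              proof (cases "nat \<lceil>x0 * real h\<rceil> \<le> 1")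
                case True then show ?thesis unfolding j_def using xh0 by simp
              next
                case False
                then have "real j = real_of_int \<lceil>x0 * real h\<rceil>" unfolding j_def using xh0 by simp
                also have "\<dots> \<le> x0 * real h + 1" by simp
                finally show ?thesis .
              qed
              have "\<not> (m - h + j \<le> card {k\<in>{1..m}. q k \<le> real j * \<alpha> / real h})"
                using nr rej_iff[OF hm h0, of \<alpha> q] j1 jh by auto
              then have "card {k\<in>{1..m}. q k \<le> real j * \<alpha> / real h} + 1 \<le> m - h + j" by simp
              then have "real (card {k\<in>{1..m}. q k \<le> real j * \<alpha> / real h}) + 1 \<le> real (m - h + j)"
                by (metis of_nat_1 of_nat_add of_nat_le_iff)
              also have "real (m - h + j) = real m - real h + real j" using hm by (simp add: of_nat_diff)
              finally have c1: "real (card {k\<in>{1..m}. q k \<le> real j * \<alpha> / real h}) + 1 \<le> real m - real h + real j" .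
              have sx: "x0 * \<alpha> \<le> real j * \<alpha> / real h"
              proof -
                have "x0 * real h * \<alpha> \<le> real j * \<alpha>" using jge assms(2) by (intro mult_right_mono) auto
                then show ?thesis using h0 by (simp add: le_divide_eq mult.commute mult.left_commute)
              qed
              have "card {k\<in>{1..m}. p k \<omega> \<le> x0 * \<alpha>} \<le> card {k\<in>{1..m}. q k \<le> real j * \<alpha> / real h}"
                unfolding q_def by (rule Nmono[OF sx])
              then have c2: "real (card {k\<in>{1..m}. p k \<omega> \<le> x0 * \<alpha>}) \<le> real m - (1 - x0) * real h"
                using c1 jle by (simp add: algebra_simps)
              have "(1 - x0) * ((\<pi> + \<epsilon>) * real m) < (1 - x0) * real h"
                using hgt x0 by (intro mult_strict_left_mono) auto
              then have "real (card {k\<in>{1..m}. p k \<omega> \<le> x0 * \<alpha>}) < (1 - (1 - x0) * (\<pi> + \<epsilon>)) * real m"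
                using c2 by (simp add: algebra_simps)
              then have F1: "real (card {k\<in>{1..m}. p k \<omega> \<le> x0 * \<alpha>}) / real m < 1 - (1 - x0) * (\<pi> + \<epsilon>)"
                using mpos by (simp add: pos_divide_less_eq)
              have "(1 - P (x0 * \<alpha>)) / (1 - x0) < \<pi> + \<epsilon>/3" using x0 unfolding g_def by simp
              then have F2: "1 - P (x0 * \<alpha>) < (\<pi> + \<epsilon>/3) * (1 - x0)" using x0 by (simp add: pos_divide_less_eq)
              have eq: "(1 - x0) * (\<pi> + \<epsilon>) - (\<pi> + \<epsilon>/3) * (1 - x0) = 2 * \<delta>1"
                unfolding \<delta>1_def by (simp add: field_simps)
              have "\<delta>1 \<le> \<bar>real (card {k\<in>{1..m}. p k \<omega> \<le> x0*\<alpha>}) / real m - P (x0*\<alpha>)\<bar>"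
                using F1 F2 eq \<delta>1 by linarith
              then have "\<omega> \<in> E1 m" unfolding E1_def using \<omega> by simp
              then show False using nE1 by simp
            next
              assume lo: "real h / real m < \<pi> - \<epsilon>"
              have "0 \<le> real h / real m" by simp
              then have pe: "0 < \<pi> - \<epsilon>" using lo by linarith
              have \<epsilon>1: "\<epsilon> \<le> 1" using pe pi1 by linarith
              define i where "i = nat \<lceil>(\<pi> - \<epsilon>) * real m\<rceil>"
              have ypos: "0 < (\<pi> - \<epsilon>) * real m" using pe mpos by simp
              have iy: "(\<pi> - \<epsilon>) * real m \<le> real i" unfolding i_def using ypos by linarith
              have iy2: "real i \<le> (\<pi> - \<epsilon>) * real m + 1" unfolding i_def using ypos by simp
              have i0: "0 < i" using iy ypos by simp
              have im: "i \<le> m"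
              proof -
                have "(\<pi> - \<epsilon>) * real m \<le> 1 * real m" using pi1 \<epsilon> mpos by (intro mult_right_mono) auto
                then have "\<lceil>(\<pi> - \<epsilon>) * real m\<rceil> \<le> int m" by (simp add: ceiling_le_iff)
                then show ?thesis unfolding i_def by (simp only: nat_le_iff)
              qed
              define r where "r = real i / real m"
              have r0: "0 \<le> r" and r1: "r \<le> 1" unfolding r_def using im mpos by auto
              have "r \<le> ((\<pi> - \<epsilon>) * real m + 1) / real m" unfolding r_def using iy2 mpos
                by (intro divide_right_mono) auto
              also have "\<dots> = (\<pi> - \<epsilon>) + 1 / real m" using mpos by (simp add: field_simps)
              finally have r2: "r \<le> \<pi> - \<epsilon>/2" using invm by linarith
              have "\<not> simes_rejects \<alpha> q (K_set m q i)"
              proof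
                assume "simes_rejects \<alpha> q (K_set m q i)"
                then obtain j where j: "j \<in> {1..i}"
                  and cj: "m - i + j \<le> card {k\<in>{1..m}. q k \<le> real j * \<alpha> / real i}"
                  using rej_iff[OF im i0] by auto
                define t where "t = real j / real i"
                have t0: "0 < t" and t1: "t \<le> 1" unfolding t_def using j i0 by auto
                define kk where "kk = nat \<lceil>t * real L\<rceil>"
                have tL0: "0 < t * real L" using t0 L by simp
                have kk1: "1 \<le> kk" unfolding kk_def using tL0 by linarith
                have kkL: "kk \<le> L"
                proof -
                  have "t * real L \<le> 1 * real L" using t1 by (intro mult_right_mono) auto
                  then have "\<lceil>t * real L\<rceil> \<le> int L" by (simp add: ceiling_le_iff)
                  then show ?thesis unfolding kk_def by (simp only: nat_le_iff)
                qed
                define b where "b = real kk / real L"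
                have kkge: "t * real L \<le> real kk" unfolding kk_def using tL0 by linarith
                have kkle: "real kk \<le> t * real L + 1" unfolding kk_def using tL0 by simp
                have tb: "t \<le> b" unfolding b_def using kkge L by (simp add: le_divide_eq)
                have bt: "b \<le> t + 1 / real L"
                proof -
                  have "real kk / real L \<le> (t * real L + 1) / real L" using kkle L by (intro divide_right_mono) auto
                  also have "\<dots> = t + 1 / real L" using L by (simp add: field_simps)
                  finally show ?thesis unfolding b_def .
                qed
                have b1: "b \<le> 1" unfolding b_def using kkL L by simp
                define s where "s = real kk * \<alpha> / real L"
                have bs: "b * \<alpha> = s" unfolding b_def s_def by simp
                have "\<not> \<eta> \<le> \<bar>real (card {k\<in>{1..m}. p k \<omega> \<le> s}) / real m - P s\<bar>"
                  using nE2[of kk] kk1 kkL \<omega> unfolding E2_def s_def by auto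
                then have "real (card {k\<in>{1..m}. p k \<omega> \<le> s}) / real m < P s + \<eta>" by linarith
                then have Nb: "real (card {k\<in>{1..m}. p k \<omega> \<le> s}) < (P s + \<eta>) * real m"
                  using mpos by (simp add: pos_divide_less_eq)
                have sj: "real j * \<alpha> / real i \<le> s"
                proof -
                  have "real j * \<alpha> / real i = t * \<alpha>" unfolding t_def by simp
                  also have "\<dots> \<le> b * \<alpha>" using tb assms(2) by (intro mult_right_mono) auto
                  finally show ?thesis using bs by simp
                qed
                have Nj: "card {k\<in>{1..m}. q k \<le> real j * \<alpha> / real i} \<le> card {k\<in>{1..m}. p k \<omega> \<le> s}"
                  unfolding q_def by (rule Nmono[OF sj])
                have Pbs: "P s \<le> 1 - c"
                proof -
                  have "s \<le> \<alpha>" using b1 assms(2) bs[symmetric] by (simp add: mult_left_le_one_le)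
                  then show ?thesis unfolding c_def using Pmono by simp
                qed
                have Pbg: "P s \<le> 1 - \<pi> * (1 - b)"
                proof (cases "b < 1")
                  case True
                  have b0: "0 \<le> b" unfolding b_def by simp
                  have "\<pi> \<le> g b" unfolding \<pi>_def using piglb[OF \<open>P \<alpha> < 1\<close>, of b] True b0 by simp
                  then have "\<pi> \<le> (1 - P s) / (1 - b)" unfolding g_def bs .
                  then have "\<pi> * (1 - b) \<le> 1 - P s" using True by (simp add: le_divide_eq)
                  then show ?thesis by simp
                next
                  case False
                  then have "b = 1" using b1 by simp
                  then show ?thesis using P1[of s] by simp
                qed
                have key: "P s + \<epsilon>*c/8 \<le> 1 - r * (1 - t)"
                  by (rule lower_arith[OF Pbs Pbg r0 r1 r2 t0 tb bt b1 pi1 _ L' c0 \<epsilon> \<epsilon>1])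
                     (use pic c0 in simp)
                have eqm: "(1 - r * (1 - t)) * real m = real m - real i + real j"
                  unfolding r_def t_def using mpos i0 by (simp add: field_simps)
                have "(P s + \<eta>) * real m \<le> (1 - r * (1 - t)) * real m"
                  using key mpos unfolding \<eta>_def by (intro mult_right_mono) auto
                then have "real (card {k\<in>{1..m}. q k \<le> real j * \<alpha> / real i}) < real m - real i + real j"
                  using Nb Nj eqm by (smt (verit) of_nat_le_iff)
                moreover have "real (m - i + j) = real m - real i + real j" using im by (simp add: of_nat_diff)
                moreover have "real (m - i + j) \<le> real (card {k\<in>{1..m}. q k \<le> real j * \<alpha> / real i})"
                  using cj by (simp only: of_nat_le_iff)
                ultimately show False by linarith
              qed
              then have "i \<le> h" using hmax im by simp
              then have "real i / real m \<le> real h / real m" using mpos by (simp add: divide_right_mono)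
              moreover have "\<pi> - \<epsilon> \<le> real i / real m" using iy mpos by (simp add: le_divide_eq)
              ultimately show False using lo by linarith
            qed
          qed
        qed
        have bnd: "measure M (A m) \<le> measure M (E1 m) + (\<Sum>kk\<in>{1..L}. measure M (E2 m kk))"
          if "M0 \<le> m" for m
        proof -
          have U2: "(\<Union>kk\<in>{1..L}. E2 m kk) \<in> sets M" using E2s by auto
          have "measure M (A m) \<le> measure M (E1 m \<union> (\<Union>kk\<in>{1..L}. E2 m kk))"
            by (rule finite_measure_mono[OF incl[OF that]]) (use E1s U2 in auto)
          also have "\<dots> \<le> measure M (E1 m) + measure M (\<Union>kk\<in>{1..L}. E2 m kk)"
            by (rule measure_Un_le) (use E1s U2 in auto)
          also have "measure M (\<Union>kk\<in>{1..L}. E2 m kk) \<le> (\<Sum>kk\<in>{1..L}. measure M (E2 m kk))"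
            by (rule finite_measure_subadditive_finite) (use E2s in auto)
          finally show ?thesis by simp
        qed
        have lim: "(\<lambda>m. measure M (E1 m) + (\<Sum>kk\<in>{1..L}. measure M (E2 m kk))) \<longlonglongrightarrow> 0"
          unfolding E1_def E2_def
          by (intro tendsto_add_zero tendsto_null_sum wlln[OF assms(1) pm assms(6) PP] \<delta>1 \<eta>)
        have "(\<lambda>m. measure M (A m)) \<longlonglongrightarrow> 0"
          by (rule tendsto_sandwich[OF _ _ tendsto_const lim])
             (use bnd in \<open>auto simp: eventually_sequentially intro!: exI[of _ M0]\<close>)
        then show ?thesis unfolding A_def .
      qed
    qed
  qed
qed

end
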